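(* Let $\mathbb{F}$ be a field and $n\ge1$. For every $A\in M(n,\mathbb{F})$ we have $A\sim_{M(n,\mathbb{F})} A_s$. In particular, $A\sim_{M(n,\mathbb{F})} 0$ for every nilpotent $A\in M(n,\mathbb{F})$.
   Context: $M(n,\mathbb{F})$ denotes the semigroup of all $n\times n$ matrices over $\mathbb{F}$ under matrix multiplication, identified with linear operators on $\mathbb{F}^n$. Two elements $a,b$ of a semigroup $S$ are primarily $S$-conjugated if there are $x,y\in S$ with $a=xy$ and $b=yx$; $\sim_S$ is the transitive closure of primary $S$-conjugacy. For $A\in M(n,\mathbb{F})$ let $t\ge 0$ be such that $A^t(\mathbb{F}^n)=A^{t+i}(\mathbb{F}^n)$ for all $i\ge 0$; then $\mathbb{F}^n=A^t(\mathbb{F}^n)\oplus\ker(A^t)$, and $A_s$ is the linear operator with $A_s(v)=A(v)$ for $v\in A^t(\mathbb{F}^n)$ and $A_s(v)=0$ for $v\in\ker(A^t)$. *)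

theory Defs
  imports "HOL-Analysis.Analysis"
begin

primrec matpow :: "('a::comm_ring_1)^'n^'n \<Rightarrow> nat \<Rightarrow> 'a^'n^'n" where
  "matpow A 0 = mat 1"
| "matpow A (Suc k) = A ** matpow A k"

definition prim_conj :: "('a::comm_ring_1)^'n^'n \<Rightarrow> 'a^'n^'n \<Rightarrow> bool" where
  "prim_conj a b \<longleftrightarrow> (\<exists>x y. a = x ** y \<and> b = y ** x)"

definition matrix_conj :: "('a::comm_ring_1)^'n^'n \<Rightarrow> 'a^'n^'n \<Rightarrow> bool" where
  "matrix_conj = prim_conj\<^sup>+\<^sup>+"

definition img_pow :: "('a::comm_ring_1)^'n^'n \<Rightarrow> nat \<Rightarrow> ('a^'n) set" where
  "img_pow A t = range (\<lambda>v. matpow A t *v v)"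

definition ker_pow :: "('a::comm_ring_1)^'n^'n \<Rightarrow> nat \<Rightarrow> ('a^'n) set" where
  "ker_pow A t = {v. matpow A t *v v = 0}"

definition semisimple_part :: "('a::field)^'n^'n \<Rightarrow> 'a^'n^'n" where
  "semisimple_part A = (THE B. \<exists>t. (\<forall>i. img_pow A t = img_pow A (t + i)) \<and>
      (\<forall>v\<in>img_pow A t. B *v v = A *v v) \<and> (\<forall>v\<in>ker_pow A t. B *v v = 0))"

definition nilpotent_mat :: "('a::comm_ring_1)^'n^'n \<Rightarrow> bool" where
  "nilpotent_mat A \<longleftrightarrow> (\<exists>k. matpow A k = 0)"

end

theory Submission
  imports Defs
begin


lemma proj_exists:
  fixes U W :: "('a::field^'n) set"
  assumes sU: "vec.subspace U" and sW: "vec.subspace W" and UW: "U \<inter> W \<subseteq> {0}"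
  shows "\<exists>Q::'a^'n^'n. (\<forall>u\<in>U. Q *v u = u) \<and> (\<forall>w\<in>W. Q *v w = 0) \<and> (\<forall>v. Q *v v \<in> U)"
proof -
  obtain BU where BU: "BU \<subseteq> U" "vec.independent BU" "U \<subseteq> vec.span BU"
    using vec.basis_exists by blast
  obtain BW where BW: "BW \<subseteq> W" "vec.independent BW" "W \<subseteq> vec.span BW"
    using vec.basis_exists by blast
  have spU: "vec.span BU = U" using BU sU by (simp add: vec.span_subspace)
  have spW: "vec.span BW = W" using BW sW by (simp add: vec.span_subspace)
  have ind: "vec.independent (BU \<union> C)" if "C \<subseteq> BW" for C
  proof -
    have "finite C" using finite_subset[OF that vec.finiteI_independent[OF BW(2)]] .
    then show ?thesis using that
    proof (induction C rule: finite_induct)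
      case empty thus ?case using BU by simp
    next
      case (insert b C)
      have bW: "b \<in> W" using insert BW by auto
      have CW: "vec.span C \<subseteq> W" using insert.prems BW sW
        by (meson dual_order.trans insert_subset vec.span_minimal)
      have nb: "b \<notin> vec.span C"
      proof -
        have "vec.independent (insert b C)" using insert.prems BW(2) vec.independent_mono by blast
        then show ?thesis using insert.hyps by (simp add: vec.independent_insert)
      qed
      have "b \<notin> vec.span (BU \<union> C)"
      proof
        assume "b \<in> vec.span (BU \<union> C)"
        then obtain x y where xy: "b = x + y" "x \<in> vec.span BU" "y \<in> vec.span C"
          by (auto simp: vec.span_Un)
        have "x = b - y" using xy by simp
        then have "x \<in> W" using bW CW xy(3) sW by (metis subsetD vec.subspace_diff)
        moreover have "x \<in> U" using xy spU by simp
        ultimately have "x = 0" using UW by auto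
        then show False using xy nb by simp
      qed
      moreover have "insert b (BU \<union> C) = BU \<union> insert b C" by auto
      ultimately show ?case using insert vec.independent_insertI by (metis insert_subset)
    qed
  qed
  let ?B = "BU \<union> BW"
  let ?g = "\<lambda>x. if x \<in> BU then x else (0::'a^'n)"
  have indB: "vec.independent ?B" using ind by simp
  define f where "f = vec.construct ?B ?g"
  have lf: "Vector_Spaces.linear (*s) (*s) f" unfolding f_def using indB by (rule vec.linear_construct)
  have fb: "f b = ?g b" if "b \<in> ?B" for b unfolding f_def using indB that by (rule vec.construct_basis)
  have fU: "f u = u" if "u \<in> U" for u
    using vec.linear_eq_on[OF lf vec.linear_id, of u BU] that spU fb by auto
  have fW: "f w = 0" if "w \<in> W" for w
  proof -
    have "BU \<inter> BW \<subseteq> {0}" using BU BW UW by auto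
    moreover have "0 \<notin> BW" using BW(2) vec.dependent_zero by blast
    ultimately have "\<forall>b\<in>BW. f b = 0" using fb by auto
    then show ?thesis using vec.linear_eq_on[OF lf vec.linear_zero, of w BW] that spW by auto
  qed
  have fr: "f v \<in> U" for v
  proof -
    have "f v \<in> vec.span (?g ` ?B)" unfolding f_def using indB by (rule vec.construct_in_span)
    moreover have "?g ` ?B \<subseteq> U" using BU sU vec.subspace_0 by auto
    ultimately show ?thesis using sU vec.span_minimal by blast
  qed
  show ?thesis
    by (rule exI[of _ "matrix f"]) (simp add: matrix_works[OF lf] fU fW fr)
qed


definition im :: "('a::field)^'n^'n \<Rightarrow> ('a^'n) set" where
  "im M = range (\<lambda>v. M *v v)"

lemma im_subspace: "vec.subspace (im (M::('a::field)^'n^'n))"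
  unfolding im_def vec.subspace_def
  by (metis (no_types, lifting) rangeE rangeI vec.add vec.scale vec.zero)

lemma ker_subspace: "vec.subspace {v. (M::('a::field)^'n^'n) *v v = 0}"
  unfolding vec.subspace_def by (simp add: vec.add vec.scale)

lemma im_mult: "im (M ** N) = (\<lambda>v. M *v v) ` im N"
  unfolding im_def by (auto simp: matrix_vector_mul_assoc[symmetric] image_image)

lemma matpow_Suc': "matpow A (Suc k) = matpow A k ** A"
  by (induction k) (simp_all add: matrix_mul_assoc)

lemma matpow_add: "matpow A (a + b) = matpow A a ** matpow A b"
  by (induction a) (simp_all add: matrix_mul_assoc)

lemma matpow_comm: "A ** matpow A k = matpow A k ** A"
  using matpow_Suc' by (metis matpow.simps(2))

lemma img_pow_mono: "img_pow A (k + i) \<subseteq> img_pow (A::('a::field)^'n^'n) k"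
  unfolding img_pow_def
  by (auto simp: matpow_add matrix_vector_mul_assoc[symmetric])

lemma ker_pow_mono: "ker_pow A k \<subseteq> ker_pow (A::('a::field)^'n^'n) (k + i)"
  unfolding ker_pow_def
  by (auto simp: add.commute[of k] matpow_add matrix_vector_mul_assoc[symmetric] vec.zero)

lemma img_stable_exists: "\<exists>t. \<forall>i. img_pow (A::('a::field)^'n^'n) t = img_pow A (t + i)"
proof -
  obtain t where t: "\<forall>k. vec.dim (img_pow A t) \<le> vec.dim (img_pow A k)"
    using ex_has_least_nat[of "\<lambda>_. True" 0 "\<lambda>k. vec.dim (img_pow A k)"] by auto
  have "img_pow A (t + i) = img_pow A t" for i
  proof (rule vec.subspace_dim_equal)
    show "vec.subspace (img_pow A (t + i))" "vec.subspace (img_pow A t)"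
      using im_subspace unfolding im_def img_pow_def by auto
    show "img_pow A (t + i) \<subseteq> img_pow A t" by (rule img_pow_mono)
    show "vec.dim (img_pow A t) \<le> vec.dim (img_pow A (t + i))" using t by blast
  qed
  then show ?thesis by auto
qed

lemma ker_stable_exists: "\<exists>t. \<forall>i. ker_pow (A::('a::field)^'n^'n) t = ker_pow A (t + i)"
proof -
  let ?d = "vec.dim (UNIV::('a^'n) set)"
  obtain t where t: "\<forall>k. ?d - vec.dim (ker_pow A t) \<le> ?d - vec.dim (ker_pow A k)"
    using ex_has_least_nat[of "\<lambda>_. True" 0 "\<lambda>k. ?d - vec.dim (ker_pow A k)"] by auto
  have "ker_pow A t = ker_pow A (t + i)" for i
  proof (rule vec.subspace_dim_equal)
    show "vec.subspace (ker_pow A (t + i))" "vec.subspace (ker_pow A t)"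
      using ker_subspace unfolding ker_pow_def by auto
    have "vec.dim (ker_pow A (t+i)) \<le> ?d" "vec.dim (ker_pow A t) \<le> ?d"
      using vec.dim_subset[OF subset_UNIV] by blast+
    then show "vec.dim (ker_pow A (t + i)) \<le> vec.dim (ker_pow A t)"
      using t[rule_format, of "t+i"] by linarith
  qed (use ker_pow_mono in auto)
  then show ?thesis by auto
qed

lemma decomp:
  assumes "img_pow A t = img_pow (A::('a::field)^'n^'n) (t + t)"
  shows "\<exists>u\<in>img_pow A t. v - u \<in> ker_pow A t"
proof -
  have "matpow A t *v v \<in> img_pow A (t + t)" using assms unfolding img_pow_def by auto
  then obtain w where w: "matpow A t *v v = matpow A t *v (matpow A t *v w)"
    unfolding img_pow_def by (auto simp: matpow_add matrix_vector_mul_assoc)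
  show ?thesis
    by (rule bexI[of _ "matpow A t *v w"])
       (auto simp: img_pow_def ker_pow_def w vec.diff)
qed

definition ss_pred :: "('a::field)^'n^'n \<Rightarrow> nat \<Rightarrow> 'a^'n^'n \<Rightarrow> bool" where
  "ss_pred A t B \<longleftrightarrow> (\<forall>i. img_pow A t = img_pow A (t + i)) \<and>
      (\<forall>v\<in>img_pow A t. B *v v = A *v v) \<and> (\<forall>v\<in>ker_pow A t. B *v v = 0)"

lemma ss_uniq:
  assumes "ss_pred A t1 B1" "ss_pred A t2 B2" "t1 \<le> t2"
  shows "B1 = B2"
proof -
  have st: "\<forall>i. img_pow A t1 = img_pow A (t1 + i)" "\<forall>i. img_pow A t2 = img_pow A (t2 + i)"
    using assms unfolding ss_pred_def by auto
  have I: "img_pow A t1 = img_pow A t2"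
    using st(1) assms(3) by (metis le_add_diff_inverse)
  have K: "ker_pow A t1 \<subseteq> ker_pow A t2"
    using ker_pow_mono assms(3) by (metis le_add_diff_inverse)
  show ?thesis unfolding matrix_eq
  proof
    fix v
    obtain u where u: "u \<in> img_pow A t1" "v - u \<in> ker_pow A t1"
      using decomp st(1) by blast
    have "v = u + (v - u)" by simp
    then have "B1 *v v = B1 *v u + B1 *v (v - u)" "B2 *v v = B2 *v u + B2 *v (v - u)"
      by (metis vec.add)+
    then show "B1 *v v = B2 *v v"
      using assms u I K unfolding ss_pred_def by auto
  qed
qed

lemma ss_eq:
  assumes "ss_pred A t S"
  shows "semisimple_part A = S"
  unfolding semisimple_part_def
proof (rule the_equality)
  show "\<exists>t. (\<forall>i. img_pow A t = img_pow A (t + i)) \<and>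
      (\<forall>v\<in>img_pow A t. S *v v = A *v v) \<and> (\<forall>v\<in>ker_pow A t. S *v v = 0)"
    using assms unfolding ss_pred_def by blast
next
  fix B assume "\<exists>t. (\<forall>i. img_pow A t = img_pow A (t + i)) \<and>
      (\<forall>v\<in>img_pow A t. B *v v = A *v v) \<and> (\<forall>v\<in>ker_pow A t. B *v v = 0)"
  then obtain t1 where "ss_pred A t1 B" unfolding ss_pred_def by blast
  then show "B = S" using ss_uniq assms by (metis nat_le_linear)
qed



lemma matrix_mul_lzero0[simp]: "(0::'a::semiring_1^'m^'n) ** (M::'a^'k^'m) = 0"
  by (simp add: matrix_matrix_mult_def vec_eq_iff)
lemma matrix_add_rdistrib0: "((B + C) ** A) = (B ** A) + (C ** (A::'a::semiring_1^'k^'m))"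
  by (vector matrix_matrix_mult_def sum.distrib[symmetric] field_simps)
lemma matrix_mul_rzero0[simp]: "(M::'a::semiring_1^'m^'n) ** (0::'a^'k^'m) = 0"
  by (simp add: matrix_matrix_mult_def vec_eq_iff)

lemma matpow_NQ: "matpow (N ** Q) (Suc j) = N ** matpow N j ** Q"
  if "Q ** N = N" for N Q :: "'a::field^'n^'n"
proof (induction j)
  case 0 then show ?case by simp
next
  case (Suc j)
  have "matpow (N ** Q) (Suc (Suc j)) = (N ** Q) ** (N ** matpow N j ** Q)"
    using Suc by simp
  also have "\<dots> = N ** (Q ** N) ** matpow N j ** Q" by (simp add: matrix_mul_assoc)
  also have "\<dots> = N ** matpow N (Suc j) ** Q" using that by (simp add: matrix_mul_assoc)
  finally show ?case .
qed

lemma im_zero_iff: "im (M::'a::field^'n^'n) = {0} \<longleftrightarrow> M = 0"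
  unfolding im_def matrix_eq by auto

lemma rank_drop:
  fixes N :: "'a::field^'n^'n"
  assumes "matpow N k = 0" "N \<noteq> 0"
  shows "vec.dim (im (N ** N)) < vec.dim (im N)"
proof (rule ccontr)
  assume "\<not> ?thesis"
  then have le: "vec.dim (im N) \<le> vec.dim (im (N ** N))" by simp
  have sub: "im (N ** N) \<subseteq> im N" unfolding im_mult by (auto simp: im_def)
  have eq: "im (N ** N) = im N"
    using vec.subspace_dim_equal[OF im_subspace im_subspace sub le] .
  have "im (matpow N (Suc j)) = im N" for j
  proof (induction j)
    case 0 then show ?case by simp
  next
    case (Suc j)
    have "im (matpow N (Suc (Suc j))) = (\<lambda>v. N *v v) ` im (matpow N (Suc j))"
      by (simp add: im_mult)
    also have "\<dots> = (\<lambda>v. N *v v) ` im N" using Suc by simp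
    also have "\<dots> = im N" using eq by (simp add: im_mult)
    finally show ?case .
  qed
  moreover have "matpow N (Suc k) = 0" using assms(1) by simp
  ultimately have "im N = {0}" by (metis im_zero_iff)
  then show False using assms(2) im_zero_iff by blast
qed

lemma red:
  fixes P S N :: "'a::field^'n^'n"
  assumes "P ** P = P" "P ** N = 0" "N ** P = 0" "S ** P = S" "P ** S = S" "matpow N k = 0"
  shows "prim_conj\<^sup>*\<^sup>* (S + N) S"
  using assms
proof (induction "vec.dim (im N)" arbitrary: N k rule: less_induct)
  case less
  show ?case
  proof (cases "N = 0")
    case True then show ?thesis by simp
  next
    case False
    have UW: "im N \<inter> im P \<subseteq> {0}"
    proof
      fix v assume "v \<in> im N \<inter> im P"
      then have "v \<in> im N" "v \<in> im P" by auto
      then obtain w u where wu: "v = N *v w" "v = P *v u" unfolding im_def by (metis rangeE)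
      have "P *v v = v" using wu less.prems(1) by (metis matrix_vector_mul_assoc)
      moreover have "P *v v = 0" using wu less.prems(2)
        by (metis matrix_vector_mul_assoc matrix_vector_mult_0)
      ultimately show "v \<in> {0}" by simp
    qed
    obtain Q where Q: "\<forall>u\<in>im N. Q *v u = u" "\<forall>w\<in>im P. Q *v w = 0" "\<forall>v. Q *v v \<in> im N"
      using proj_exists[OF im_subspace im_subspace UW] by blast
    have QN: "Q ** N = N" unfolding matrix_eq
      using Q(1) by (auto simp: im_def matrix_vector_mul_assoc[symmetric])
    have QP: "Q ** P = 0" unfolding matrix_eq
      using Q(2) by (auto simp: im_def matrix_vector_mul_assoc[symmetric])
    have PQ: "P ** Q = 0" unfolding matrix_eq
    proof
      fix v
      obtain w where "Q *v v = N *v w" using Q(3) unfolding im_def by blast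
      then show "(P ** Q) *v v = 0 *v v"
        using less.prems(2) by (metis matrix_vector_mul_assoc matrix_vector_mult_0)
    qed
    have QS: "Q ** S = 0" using QP less.prems(5)
      by (metis matrix_mul_assoc matrix_mul_lzero0)
    have SQ: "S ** Q = 0" using PQ less.prems(4)
      by (metis matrix_mul_assoc matrix_mul_rzero0)
    have step: "prim_conj (S + N) (S + N ** Q)"
      unfolding prim_conj_def
    proof (intro exI conjI)
      have "(P + Q) ** (S + N) = (P ** S + P ** N) + (Q ** S + Q ** N)"
        by (simp add: matrix_add_ldistrib matrix_add_rdistrib0 add_ac)
      then show "S + N = (P + Q) ** (S + N)"
        using less.prems(2,5) QN QS by simp
      have "(S + N) ** (P + Q) = (S ** P + S ** Q) + (N ** P + N ** Q)"
        by (simp add: matrix_add_ldistrib matrix_add_rdistrib0 add_ac)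
      then show "S + N ** Q = (S + N) ** (P + Q)"
        using less.prems(3,4) SQ by simp
    qed
    have r1: "vec.dim (im (N ** Q)) \<le> vec.dim (im (N ** N))"
    proof (rule vec.dim_subset)
      show "im (N ** Q) \<subseteq> im (N ** N)"
        using Q(3) unfolding im_mult by (auto simp: im_def)
    qed
    have lt: "vec.dim (im (N ** Q)) < vec.dim (im N)"
      using r1 rank_drop[OF less.prems(6) False] by linarith
    have nil: "matpow (N ** Q) (Suc k) = 0"
      using matpow_NQ[OF QN] less.prems(6) by (simp add: matrix_mul_lzero0 matrix_mul_rzero0)
    have "prim_conj\<^sup>*\<^sup>* (S + N ** Q) S"
    proof (rule less.hyps[OF lt _ _ _ _ _ nil])
      show "P ** P = P" "S ** P = S" "P ** S = S" using less.prems by auto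
      show "P ** (N ** Q) = 0" using less.prems(2) by (simp add: matrix_mul_assoc)
      show "N ** Q ** P = 0" using QP by (simp add: matrix_mul_assoc[symmetric])
    qed
    with step show ?thesis by (rule converse_rtranclp_into_rtranclp)
  qed
qed



lemma mv: "(M ** M') *v v = M *v (M' *v v)" for M M' :: "'a::field^'n^'n"
  by (simp add: matrix_vector_mul_assoc)

lemma main_conj:
  fixes A :: "'a::field^'n^'n"
  shows "prim_conj\<^sup>*\<^sup>* A (semisimple_part A)"
proof -
  obtain t1 where t1: "\<forall>i. img_pow A t1 = img_pow A (t1+i)" using img_stable_exists by blast
  obtain t2 where t2: "\<forall>i. ker_pow A t2 = ker_pow A (t2+i)" using ker_stable_exists by blast
  define t where "t = t1 + t2"
  have st: "\<forall>i. img_pow A t = img_pow A (t+i)"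
  proof
    fix i
    have "img_pow A t = img_pow A t1" using t1[rule_format, of t2] by (simp add: t_def)
    moreover have "img_pow A (t+i) = img_pow A t1" using t1[rule_format, of "t2+i"] by (simp add: t_def add.assoc)
    ultimately show "img_pow A t = img_pow A (t+i)" by simp
  qed
  have kt: "ker_pow A t = ker_pow A (t+t)"
  proof -
    have "ker_pow A t = ker_pow A t2" using t2[rule_format, of t1] by (simp add: t_def add.commute)
    moreover have "ker_pow A (t+t) = ker_pow A t2" using t2[rule_format, of "t1+t"] by (simp add: t_def ac_simps)
    ultimately show ?thesis by simp
  qed
  define I where "I = img_pow A t"
  define K where "K = ker_pow A t"
  have sI: "vec.subspace I" using im_subspace[of "matpow A t"] unfolding I_def img_pow_def im_def .
  have sK: "vec.subspace K" using ker_subspace[of "matpow A t"] unfolding K_def ker_pow_def .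
  have IK: "I \<inter> K \<subseteq> {0}"
  proof
    fix u assume "u \<in> I \<inter> K"
    then obtain w where u: "u = matpow A t *v w" and u0: "matpow A t *v u = 0"
      by (auto simp: I_def K_def img_pow_def ker_pow_def)
    then have "matpow A (t+t) *v w = 0" by (simp add: matpow_add mv)
    then have "w \<in> K" using kt by (simp add: K_def ker_pow_def)
    then show "u \<in> {0}" using u by (simp add: K_def ker_pow_def)
  qed
  obtain P where P: "\<forall>u\<in>I. P *v u = u" "\<forall>k\<in>K. P *v k = 0" "\<forall>v. P *v v \<in> I"
    using proj_exists[OF sI sK IK] by blast
  have dec: "\<exists>u\<in>I. v - u \<in> K" for v
    using decomp[OF st[rule_format, of t], of v] unfolding I_def K_def .
  have AI: "A *v u \<in> I" if "u \<in> I" for u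
  proof -
    from that obtain w where "u = matpow A t *v w" by (auto simp: I_def img_pow_def)
    then have "A *v u = matpow A t *v (A *v w)" by (simp add: mv[symmetric] matpow_comm)
    then show ?thesis by (simp add: I_def img_pow_def)
  qed
  have AK: "A *v k \<in> K" if "k \<in> K" for k
  proof -
    have "matpow A t *v (A *v k) = A *v (matpow A t *v k)" by (simp add: mv[symmetric] matpow_comm)
    then show ?thesis using that by (simp add: K_def ker_pow_def)
  qed
  have Pv: "P *v v = u" if "u \<in> I" "v - u \<in> K" for v u
  proof -
    have "P *v v = P *v u + P *v (v - u)" by (simp add: matrix_vector_mult_diff_distrib)
    then show ?thesis using that P by simp
  qed
  have PP: "P ** P = P" unfolding matrix_eq using P by (simp add: mv)
  have PA: "P ** A = A ** P" unfolding matrix_eq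
  proof
    fix v
    obtain u where u: "u \<in> I" "v - u \<in> K" using dec by blast
    have "A *v v - A *v u \<in> K" using AK[OF u(2)] by (simp add: matrix_vector_mult_diff_distrib)
    then have "P *v (A *v v) = A *v u" by (rule Pv[OF AI[OF u(1)]])
    moreover have "P *v v = u" by (rule Pv[OF u])
    ultimately show "(P ** A) *v v = (A ** P) *v v" by (simp add: mv)
  qed
  define S where "S = A ** P"
  have pred: "ss_pred A t S" unfolding ss_pred_def
  proof (intro conjI ballI)
    show "\<forall>i. img_pow A t = img_pow A (t + i)" by (rule st)
  next
    fix v assume "v \<in> img_pow A t"
    then show "S *v v = A *v v" using P(1) by (simp add: S_def mv I_def)
  next
    fix v assume "v \<in> ker_pow A t"
    then show "S *v v = 0" using P(2) by (simp add: S_def mv K_def)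
  qed
  have ssS: "semisimple_part A = S" by (rule ss_eq[OF pred])
  define N where "N = A - S"
  have SP: "S ** P = S" unfolding S_def using PP by (simp add: matrix_mul_assoc[symmetric])
  have PS: "P ** S = S"
  proof -
    have "P ** S = (P ** A) ** P" by (simp add: S_def matrix_mul_assoc)
    also have "\<dots> = A ** (P ** P)" by (simp add: PA matrix_mul_assoc)
    finally show ?thesis by (simp add: PP S_def)
  qed
  have PN: "P ** N = 0" unfolding matrix_eq
  proof
    fix v
    have e1: "P *v (A *v v) = A *v (P *v v)" using PA by (metis mv)
    have e2: "P *v (A *v (P *v v)) = A *v (P *v v)" using PA PP by (metis mv)
    show "(P ** N) *v v = 0 *v v"
      by (simp add: N_def S_def mv matrix_vector_mult_diff_distrib matrix_vector_mult_diff_rdistrib e1 e2)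
  qed
  have NP: "N ** P = 0" unfolding matrix_eq
  proof
    fix v
    have e: "P *v (P *v v) = P *v v" using PP by (metis mv)
    show "(N ** P) *v v = 0 *v v"
      by (simp add: N_def S_def mv matrix_vector_mult_diff_rdistrib e)
  qed
  have NK: "N *v v \<in> K" for v
  proof -
    obtain u where u: "u \<in> I" "v - u \<in> K" using dec by blast
    have "N *v v = A *v (v - P *v v)"
      by (simp add: N_def S_def matrix_vector_mult_diff_rdistrib matrix_vector_mult_diff_distrib mv)
    then show ?thesis using Pv[OF u] AK u by simp
  qed
  have NA: "N *v k = A *v k" if "k \<in> K" for k
    using that P by (simp add: N_def S_def matrix_vector_mult_diff_rdistrib mv)
  have powK: "\<forall>k\<in>K. matpow N j *v k = matpow A j *v k" for j
  proof (induction j)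
    case 0 then show ?case by simp
  next
    case (Suc j)
    show ?case
    proof
      fix k assume k: "k \<in> K"
      have "matpow N (Suc j) *v k = matpow N j *v (N *v k)" by (simp only: matpow_Suc' mv)
      also have "\<dots> = matpow A j *v (A *v k)" using NA[OF k] Suc AK[OF k] by simp
      also have "\<dots> = matpow A (Suc j) *v k" by (simp only: matpow_Suc' mv)
      finally show "matpow N (Suc j) *v k = matpow A (Suc j) *v k" .
    qed
  qed
  have nil: "matpow N (Suc t) = 0" unfolding matrix_eq
  proof
    fix v
    have "matpow N (Suc t) *v v = matpow N t *v (N *v v)" by (simp only: matpow_Suc' mv)
    also have "\<dots> = matpow A t *v (N *v v)" using powK[of t] NK[of v] by simp
    also have "\<dots> = 0" using NK[of v] by (simp add: K_def ker_pow_def)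
    finally show "matpow N (Suc t) *v v = 0 *v v" by simp
  qed
  have "prim_conj\<^sup>*\<^sup>* (S + N) S" by (rule red[OF PP PN NP SP PS nil])
  moreover have "S + N = A" by (simp add: N_def)
  ultimately show ?thesis using ssS by simp
qed

lemma prim_refl: "prim_conj (Y::'a::field^'n^'n) Y"
  unfolding prim_conj_def by (rule exI[of _ Y], rule exI[of _ "mat 1"]) simp

theorem lemma2:
  fixes A :: "('a::field)^'n^'n"
  shows "matrix_conj A (semisimple_part A)
    \<and> (\<forall>N :: 'a^'n^'n. nilpotent_mat N \<longrightarrow> matrix_conj N 0)"
proof
  show "matrix_conj A (semisimple_part A)"
    unfolding matrix_conj_def by (rule rtranclp_into_tranclp1[OF main_conj prim_refl])
  show "\<forall>N :: 'a^'n^'n. nilpotent_mat N \<longrightarrow> matrix_conj N 0"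
  proof (intro allI impI)
    fix N :: "'a^'n^'n" assume "nilpotent_mat N"
    then obtain k where k: "matpow N k = 0" unfolding nilpotent_mat_def by blast
    have "prim_conj\<^sup>*\<^sup>* (0 + N) 0" by (rule red[where P=0 and S=0, OF _ _ _ _ _ k]) simp_all
    then have "prim_conj\<^sup>*\<^sup>* N 0" by simp
    then show "matrix_conj N 0"
      unfolding matrix_conj_def using prim_refl[of "0::'a^'n^'n"] by (rule rtranclp_into_tranclp1)
  qed
qed

end
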